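(* For every $\forall^+$ type $P$, $I\ \llbracket P\cdot P\to P\rrbracket_e\ I$; equivalently, whenever $x\,\llbracket P\rrbracket_e\,y$ and $y\,\llbracket P\rrbracket_e\,z$, also $x\,\llbracket P\rrbracket_e\,z$.
   Context: Terms are those of the pure untyped $\lambda$-calculus, up to $\alpha$-equivalence; $=_{\beta\eta}$ is $\beta\eta$-convertibility; $I:=\lambda x.x$. Relational types: $R ::= X \mid R\to R' \mid \forall X.R \mid R^{\cup} \mid R\cdot R' \mid t$ (last form: promotion of a term). A relation on terms is $\beta\eta$-closed if closed under replacing either related term by a $\beta\eta$-equal one; $\mathcal{R}$ is the set of such relations; environments map type variables to $\mathcal{R}$. Interpretation: $\llbracket X\rrbracket_\gamma=\gamma(X)$; $t\,\llbracket R\to R'\rrbracket_\gamma\,t'$ iff for all $a,a'$ with $a\,\llbracket R\rrbracket_\gamma\,a'$, $t\,a\,\llbracket R'\rrbracket_\gamma\,t'\,a'$; $\llbracket \forall X.R\rrbracket_\gamma=\bigcap_{r\in\mathcal{R}}\llbracket R\rrbracket_{\gamma[X\mapsto r]}$; $t\,\llbracket R^\cup\rrbracket_\gamma\,t'$ iff $t'\,\llbracket R\rrbracket_\gamma\,t$; $t\,\llbracket R\cdot R'\rrbracket_\gamma\,t'$ iff $\exists t''$, $t\,\llbracket R\rrbracket_\gamma\,t''$ and $t''\,\llbracket R'\rrbracket_\gamma\,t'$; $\llbracket \hat t\rrbracket_\gamma=\{(t,t')\mid \hat t\,t=_{\beta\eta}t'\}$. $e$ is the environment mapping every type variable to $=_{\beta\eta}$.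 Polarities $p\in\{+,-\}$, $\bar p$ the other; the property $\forall^p$: type variables are $\forall^p$; if $R$ is $\forall^{\bar p}$ and $R'$ is $\forall^p$ then $R\to R'$ is $\forall^p$; if $R$ is $\forall^+$ then $\forall X.R$ is $\forall^+$; if $R$ is $\forall^p$ then so is $R^\cup$; a promotion of $t$ with $t=_{\beta\eta}I$ is $\forall^p$. *)

theory Defs
  imports Main
begin

datatype trm = Var nat | App trm trm | Abs trm

primrec lift :: "trm \<Rightarrow> nat \<Rightarrow> trm" where
  "lift (Var i) k = (if i < k then Var i else Var (Suc i))"
| "lift (App s t) k = App (lift s k) (lift t k)"
| "lift (Abs s) k = Abs (lift s (Suc k))"

primrec subst :: "trm \<Rightarrow> trm \<Rightarrow> nat \<Rightarrow> trm" where
  "subst (Var i) s k = (if k < i then Var (i - 1) else if i = k then s else Var i)"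
| "subst (App t u) s k = App (subst t s k) (subst u s k)"
| "subst (Abs t) s k = Abs (subst t (lift s 0) (Suc k))"

inductive step :: "trm \<Rightarrow> trm \<Rightarrow> bool" where
  beta: "step (App (Abs s) t) (subst s t 0)"
| eta: "step (Abs (App (lift s 0) (Var 0))) s"
| appL: "step s t \<Longrightarrow> step (App s u) (App t u)"
| appR: "step s t \<Longrightarrow> step (App u s) (App u t)"
| abs: "step s t \<Longrightarrow> step (Abs s) (Abs t)"

definition beq :: "trm \<Rightarrow> trm \<Rightarrow> bool" where
  "beq = equivclp step"

definition Id_trm :: trm where
  "Id_trm = Abs (Var 0)"

datatype rtype =
    TVar string
  | Arr rtype rtype
  | All string rtype
  | Conv rtype
  | Comp rtype rtype
  | Prom trm

type_synonym rel = "trm \<Rightarrow> trm \<Rightarrow> bool"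

definition be_closed :: "rel \<Rightarrow> bool" where
  "be_closed r \<longleftrightarrow> (\<forall>t t' u u'. r t t' \<longrightarrow> beq t u \<longrightarrow> beq t' u' \<longrightarrow> r u u')"

primrec interp :: "rtype \<Rightarrow> (string \<Rightarrow> rel) \<Rightarrow> rel" where
  "interp (TVar X) \<gamma> = \<gamma> X"
| "interp (Arr R R') \<gamma> = (\<lambda>t t'. \<forall>a a'. interp R \<gamma> a a' \<longrightarrow> interp R' \<gamma> (App t a) (App t' a'))"
| "interp (All X R) \<gamma> = (\<lambda>t t'. \<forall>r. be_closed r \<longrightarrow> interp R (\<gamma>(X := r)) t t')"
| "interp (Conv R) \<gamma> = (\<lambda>t t'. interp R \<gamma> t' t)"
| "interp (Comp R R') \<gamma> = (\<lambda>t t'. \<exists>t''. interp R \<gamma> t t'' \<and> interp R' \<gamma> t'' t')"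
| "interp (Prom s) \<gamma> = (\<lambda>t t'. beq (App s t) t')"

definition env_e :: "string \<Rightarrow> rel" where
  "env_e = (\<lambda>X. beq)"

text \<open>The polarity property; the boolean True stands for +, False for -.\<close>
inductive forallp :: "bool \<Rightarrow> rtype \<Rightarrow> bool" where
  var: "forallp p (TVar X)"
| arr: "forallp (\<not> p) R \<Longrightarrow> forallp p R' \<Longrightarrow> forallp p (Arr R R')"
| all: "forallp True R \<Longrightarrow> forallp True (All X R)"
| conv: "forallp p R \<Longrightarrow> forallp p (Conv R)"
| prom: "beq t Id_trm \<Longrightarrow> forallp p (Prom t)"

end

theory Submission
  imports Defs
begin

lemma lift_lift: "i < k + 1 \<Longrightarrow> lift (lift t i) (Suc k) = lift (lift t k) i"
  by (induct t arbitrary: i k) auto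

lemma lift_subst [simp]:
  "j < i + 1 \<Longrightarrow> lift (subst t s j) i = subst (lift t (i + 1)) (lift s i) j"
  by (induct t arbitrary: i j s) (simp_all add: diff_Suc lift_lift split: nat.split)

lemma lift_subst_lt:
  "i < j + 1 \<Longrightarrow> lift (subst t s j) i = subst (lift t i) (lift s i) (j + 1)"
  by (induct t arbitrary: i j s) (auto simp: lift_lift)

lemma subst_lift [simp]: "subst (lift t k) s k = t"
  by (induct t arbitrary: k s) simp_all

lemma subst_subst:
  "i < j + 1 \<Longrightarrow> subst (subst t (lift v i) (Suc j)) (subst u v j) i = subst (subst t u i) v j"
  by (induct t arbitrary: i j u v)
     (simp_all add: diff_Suc lift_lift [symmetric] lift_subst_lt split: nat.split)

lemma step_lift: "step s s' \<Longrightarrow> step (lift s i) (lift s' i)"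
proof (induct arbitrary: i rule: step.induct)
  case (beta s t)
  then show ?case using step.beta[of "lift s (Suc i)" "lift t i"] by simp
next
  case (eta s)
  have "lift (lift s 0) (Suc i) = lift (lift s i) 0" using lift_lift[of 0 i s] by simp
  then show ?case using step.eta[of "lift s i"] by simp
qed (auto intro: step.intros)

lemma step_subst: "step s s' \<Longrightarrow> step (subst s u i) (subst s' u i)"
proof (induct arbitrary: u i rule: step.induct)
  case (beta s t)
  have "subst (subst s t 0) u i = subst (subst s (lift u 0) (Suc i)) (subst t u i) 0"
    using subst_subst[of 0 i s u t] by simp
  then show ?case using step.beta[of "subst s (lift u 0) (Suc i)" "subst t u i"] by simp
next
  case (eta s)
  have "lift (subst s u i) 0 = subst (lift s 0) (lift u 0) (Suc i)"
    using lift_subst_lt[of 0 i s u] by simp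
  then show ?case using step.eta[of "subst s u i"] by simp
qed (auto intro: step.intros)

lemma beq_map:
  assumes "\<And>s s'. step s s' \<Longrightarrow> step (f s) (f s')" and "beq a b"
  shows "beq (f a) (f b)"
  using assms(2) unfolding beq_def
proof (induct rule: equivclp_induct)
  case base then show ?case by simp
next
  case (step y z)
  then show ?case using assms(1) by (meson equivclp_into_equivclp)
qed

lemma beq_refl [simp]: "beq a a" by (simp add: beq_def)
lemma beq_sym: "beq a b \<Longrightarrow> beq b a" by (simp add: beq_def equivclp_sym)
lemma beq_trans: "beq a b \<Longrightarrow> beq b c \<Longrightarrow> beq a c" unfolding beq_def by (rule equivclp_trans)
lemma step_beq: "step a b \<Longrightarrow> beq a b" by (auto simp: beq_def)

lemma beq_appL: "beq a b \<Longrightarrow> beq (App a u) (App b u)"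
  by (rule beq_map[where f="\<lambda>s. App s u"]) (auto intro: step.intros)
lemma beq_appR: "beq a b \<Longrightarrow> beq (App u a) (App u b)"
  by (rule beq_map[where f="\<lambda>s. App u s"]) (auto intro: step.intros)
lemma beq_app: "beq a b \<Longrightarrow> beq c d \<Longrightarrow> beq (App a c) (App b d)"
  by (meson beq_appL beq_appR beq_trans)
lemma beq_abs: "beq a b \<Longrightarrow> beq (Abs a) (Abs b)"
  by (rule beq_map[where f="Abs"]) (auto intro: step.intros)

lemma beq_Id: "beq (App Id_trm a) a"
  unfolding Id_trm_def using step_beq[OF step.beta[of "Var 0" a]] by simp

lemma lift_big: "\<exists>k. \<forall>j\<ge>k. lift t j = t"
proof (induct t)
  case (Var i) then show ?case by (intro exI[of _ "Suc i"]) auto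
next
  case (App s t)
  then obtain k1 k2 where "\<forall>j\<ge>k1. lift s j = s" "\<forall>j\<ge>k2. lift t j = t" by blast
  then show ?case by (intro exI[of _ "max k1 k2"]) auto
next
  case (Abs s)
  then obtain k where "\<forall>j\<ge>k. lift s j = s" by blast
  then show ?case by (intro exI[of _ k]) auto
qed

lemma ext_beq:
  assumes "\<And>a. beq (App t a) (App t' a)"
  shows "beq t t'"
proof -
  obtain k1 where k1: "\<forall>j\<ge>k1. lift t j = t" using lift_big by blast
  obtain k2 where k2: "\<forall>j\<ge>k2. lift t' j = t'" using lift_big by blast
  define k where "k = max k1 k2"
  have lt: "lift t k = t" "lift t' k = t'" using k1 k2 by (auto simp: k_def)
  define f where "f = (\<lambda>s. subst (lift s 0) (Var 0) (Suc k))"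
  have fstep: "\<And>s s'. step s s' \<Longrightarrow> step (f s) (f s')"
    unfolding f_def by (intro step_subst step_lift)
  have ft: "f u = lift u 0" if "lift u k = u" for u
  proof -
    have "lift u 0 = lift (lift u k) 0" using that by simp
    also have "\<dots> = lift (lift u 0) (Suc k)" using lift_lift[of 0 k u] by simp
    finally show ?thesis unfolding f_def by (metis subst_lift)
  qed
  have "beq (f (App t (Var k))) (f (App t' (Var k)))"
    by (rule beq_map[OF fstep assms])
  moreover have "f (App t (Var k)) = App (lift t 0) (Var 0)"
    using ft[OF lt(1)] unfolding f_def by simp
  moreover have "f (App t' (Var k)) = App (lift t' 0) (Var 0)"
    using ft[OF lt(2)] unfolding f_def by simp
  ultimately have "beq (Abs (App (lift t 0) (Var 0))) (Abs (App (lift t' 0) (Var 0)))"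
    by (simp add: beq_abs)
  moreover have "beq (Abs (App (lift t 0) (Var 0))) t" by (rule step_beq, rule step.eta)
  moreover have "beq (Abs (App (lift t' 0) (Var 0))) t'" by (rule step_beq, rule step.eta)
  ultimately show ?thesis by (meson beq_sym beq_trans)
qed

lemma be_closed_beq: "be_closed beq"
  unfolding be_closed_def by (meson beq_sym beq_trans)

lemma interp_closed:
  "(\<And>X. be_closed (\<gamma> X)) \<Longrightarrow> be_closed (interp R \<gamma>)"
proof (induct R arbitrary: \<gamma>)
  case (TVar X) then show ?case by simp
next
  case (Arr R1 R2)
  have c2: "be_closed (interp R2 \<gamma>)" using Arr by blast
  show ?case unfolding be_closed_def
  proof (intro allI impI)
    fix t t' u u' assume h: "interp (Arr R1 R2) \<gamma> t t'" "beq t u" "beq t' u'"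
    show "interp (Arr R1 R2) \<gamma> u u'"
    proof (simp, intro allI impI)
      fix a a' assume "interp R1 \<gamma> a a'"
      then have "interp R2 \<gamma> (App t a) (App t' a')" using h(1) by simp
      moreover have "beq (App t a) (App u a)" "beq (App t' a') (App u' a')"
        using h by (auto intro: beq_appL)
      ultimately show "interp R2 \<gamma> (App u a) (App u' a')"
        using c2 unfolding be_closed_def by blast
    qed
  qed
next
  case (All X R)
  have c: "be_closed (interp R (\<gamma>(X := r)))" if "be_closed r" for r
    using All.hyps All.prems that by simp
  show ?case unfolding be_closed_def
  proof (intro allI impI)
    fix t t' u u' assume h: "interp (All X R) \<gamma> t t'" "beq t u" "beq t' u'"
    show "interp (All X R) \<gamma> u u'"
    proof (simp, intro allI impI)
      fix r assume r: "be_closed r"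
      then have "interp R (\<gamma>(X := r)) t t'" using h(1) by simp
      then show "interp R (\<gamma>(X := r)) u u'" using c[OF r] h unfolding be_closed_def by blast
    qed
  qed
next
  case (Conv R)
  have c: "be_closed (interp R \<gamma>)" using Conv by blast
  show ?case using c unfolding be_closed_def by simp
next
  case (Comp R1 R2)
  have c1: "be_closed (interp R1 \<gamma>)" and c2: "be_closed (interp R2 \<gamma>)" using Comp by blast+
  show ?case unfolding be_closed_def
  proof (intro allI impI)
    fix t t' u u' assume h: "interp (Comp R1 R2) \<gamma> t t'" "beq t u" "beq t' u'"
    then obtain m where m: "interp R1 \<gamma> t m" "interp R2 \<gamma> m t'" by auto
    have "interp R1 \<gamma> u m" using c1 m(1) h(2) unfolding be_closed_def by (meson beq_refl)
    moreover have "interp R2 \<gamma> m u'" using c2 m(2) h(3) unfolding be_closed_def by (meson beq_refl)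
    ultimately show "interp (Comp R1 R2) \<gamma> u u'" by auto
  qed
next
  case (Prom s)
  show ?case unfolding be_closed_def
  proof (intro allI impI)
    fix t t' u u' assume h: "interp (Prom s) \<gamma> t t'" "beq t u" "beq t' u'"
    have "beq (App s u) (App s t)" using beq_appR[OF beq_sym[OF h(2)]] .
    moreover have "beq (App s t) t'" using h(1) by simp
    ultimately have "beq (App s u) u'" using h(3) beq_trans by blast
    then show "interp (Prom s) \<gamma> u u'" by simp
  qed
qed

lemma env_e_closed: "be_closed (env_e X)"
  by (simp add: env_e_def be_closed_beq)

lemma env_e_upd: "env_e(X := beq) = env_e"
  by (auto simp: env_e_def)

lemma polar:
  "forallp p R \<Longrightarrow> (p \<longrightarrow> (\<forall>a b. interp R env_e a b \<longrightarrow> beq a b))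
                   \<and> (\<not> p \<longrightarrow> (\<forall>a b. beq a b \<longrightarrow> interp R env_e a b))"
proof (induct rule: forallp.induct)
  case (var p X) then show ?case by (simp add: env_e_def)
next
  case (arr p R R')
  show ?case
  proof (intro conjI impI allI)
    fix a b assume p: p and h: "interp (Arr R R') env_e a b"
    have "beq (App a c) (App b c)" for c
      using arr p h by simp
    then show "beq a b" by (rule ext_beq)
  next
    fix a b assume p: "\<not> p" and h: "beq a b"
    show "interp (Arr R R') env_e a b"
      using arr p h by (simp add: beq_app)
  qed
next
  case (all R X)
  then show ?case by (simp add: env_e_upd[symmetric] be_closed_beq) (metis be_closed_beq env_e_upd)
next
  case (conv p R) then show ?case by (simp add: beq_sym)
next
  case (prom t p)
  have "beq (App t a) a" for a
    using beq_appL[OF prom] beq_Id beq_trans by blast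
  then show ?case by simp (meson beq_sym beq_trans)
qed

theorem mainTheorem11:
  assumes "forallp True P"
  shows "interp (Arr (Comp P P) P) env_e Id_trm Id_trm \<and>
         (\<forall>x y z. interp P env_e x y \<longrightarrow> interp P env_e y z \<longrightarrow> interp P env_e x z)"
proof -
  have sub: "\<And>a b. interp P env_e a b \<Longrightarrow> beq a b" using polar[OF assms] by simp
  have cl: "be_closed (interp P env_e)" by (rule interp_closed, rule env_e_closed)
  have tr: "\<forall>x y z. interp P env_e x y \<longrightarrow> interp P env_e y z \<longrightarrow> interp P env_e x z"
    using sub cl unfolding be_closed_def by (meson beq_refl)
  moreover have "interp (Arr (Comp P P) P) env_e Id_trm Id_trm"
  proof (simp, intro allI impI)
    fix a a' assume "\<exists>t''. interp P env_e a t'' \<and> interp P env_e t'' a'"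
    then have "interp P env_e a a'" using tr by blast
    then show "interp P env_e (App Id_trm a) (App Id_trm a')"
      using cl beq_Id beq_sym unfolding be_closed_def by blast
  qed
  ultimately show ?thesis by blast
qed

end
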